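(* Let $T$ be a tree with $m$ edges, with notation as in the context. Let $f:\mathbb{N}\times\mathbb{N}\to\mathbb{N}$ be a function with the following property: for all natural numbers $m',\lambda$, all $b'\ge 0$ and positive integers $m_1,\ldots,m_{b'+1}$ with $m'=m_1+\cdots+m_{b'+1}$, every $f(m',\lambda)$-edge-connected bipartite graph $H$ on classes $A',B'$ in which all vertices of $A'$ have degree divisible by $m'$ can be decomposed into $b'+1$ spanning $\lambda$-edge-connected graphs $H_1,\ldots,H_{b'+1}$ with $d(v,H_i)=\frac{m_i}{m'}d(v,H)$ for $v\in A'$, $i\in\{1,\ldots,b'+1\}$, and $d(v,H_i)$ divisible by $m_i$ for $v\in B'$, $i\in\{1,\ldots,b'\}$ (such a function exists). Let $d$ be a natural number and let $G$ be a bipartite graph on vertex classes $A$ and $B$ in which every vertex of $A$ has degree divisible by $m$. If $G$ is $f(m,md)$-edge-connected, then $G$ admits a $T$-equitable edge-colouring in which every vertex has at least $d$ incident edges of each colour $1,\ldots,m$.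
   Context: All graphs are finite and loopless but may have multiple edges. Let $T_A$, $T_B$ be the two vertex classes of a proper $2$-colouring of $T$, chosen so that $T_B$ contains a leaf of $T$. Denote the non-leaves of $T$ in $T_A$ by $t_1,\ldots,t_a$ and those in $T_B$ by $t_{a+1},\ldots,t_{a+b}$. Colour the edges of $T$ with colours $1,\ldots,m$, distinct edges getting distinct colours, and let $T(i)$ be the set of colours at $t_i$. For an edge-colouring of $G$, $d_j(v)$ is the number of edges of colour $j$ at $v$. An edge-colouring of $G$ with colours $1,\ldots,m$ is $T$-equitable if for every $v\in A$, $i\in\{1,\ldots,a\}$, $j,k\in T(i)$ we have $d_j(v)=d_k(v)$, and for every $v\in B$, $i\in\{a+1,\ldots,a+b\}$, $j,k\in T(i)$ we have $d_j(v)=d_k(v)$. *)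

theory Defs
  imports Main
begin

text \<open>A multigraph is a vertex set V, an edge set E and an endpoint map
  ends; each edge has exactly two distinct endpoints (loopless), parallel
  edges are allowed.\<close>

definition multigraph :: "'a set \<Rightarrow> 'e set \<Rightarrow> ('e \<Rightarrow> 'a set) \<Rightarrow> bool" where
  "multigraph V E ends \<longleftrightarrow> finite V \<and> finite E \<and>
     (\<forall>e\<in>E. ends e \<subseteq> V \<and> card (ends e) = 2)"

definition bipartite_on :: "'a set \<Rightarrow> 'e set \<Rightarrow> ('e \<Rightarrow> 'a set) \<Rightarrow> 'a set \<Rightarrow> 'a set \<Rightarrow> bool" where
  "bipartite_on V E ends A B \<longleftrightarrow> multigraph V E ends \<and> A \<union> B = V \<and> A \<inter> B = {} \<and>
     (\<forall>e\<in>E. \<exists>a\<in>A. \<exists>b\<in>B. ends e = {a, b})"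

definition deg :: "'e set \<Rightarrow> ('e \<Rightarrow> 'a set) \<Rightarrow> 'a \<Rightarrow> nat" where
  "deg E ends v = card {e\<in>E. v \<in> ends e}"

definition mg_connected :: "'a set \<Rightarrow> 'e set \<Rightarrow> ('e \<Rightarrow> 'a set) \<Rightarrow> bool" where
  "mg_connected V E ends \<longleftrightarrow>
     (\<forall>u\<in>V. \<forall>v\<in>V. (\<lambda>x y. \<exists>e\<in>E. ends e = {x, y})\<^sup>*\<^sup>* u v)"

text \<open>k-edge-connected (Diestel's convention): at least two vertices, and the
  graph stays connected after deleting any set of fewer than k edges.\<close>

definition edge_connected :: "nat \<Rightarrow> 'a set \<Rightarrow> 'e set \<Rightarrow> ('e \<Rightarrow> 'a set) \<Rightarrow> bool" where
  "edge_connected k V E ends \<longleftrightarrow> card V > 1 \<and>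
     (\<forall>F\<subseteq>E. card F < k \<longrightarrow> mg_connected V (E - F) ends)"

definition simple_graph :: "'v set \<Rightarrow> 'v set set \<Rightarrow> bool" where
  "simple_graph VT ET \<longleftrightarrow> finite VT \<and>
     ET \<subseteq> {{x, y} | x y. x \<in> VT \<and> y \<in> VT \<and> x \<noteq> y}"

definition sg_connected :: "'v set \<Rightarrow> 'v set set \<Rightarrow> bool" where
  "sg_connected VT ET \<longleftrightarrow> (\<forall>u\<in>VT. \<forall>v\<in>VT. (\<lambda>x y. {x, y} \<in> ET)\<^sup>*\<^sup>* u v)"

definition has_cycle :: "'v set \<Rightarrow> 'v set set \<Rightarrow> bool" where
  "has_cycle VT ET \<longleftrightarrow> (\<exists>xs. length xs \<ge> 3 \<and> distinct xs \<and> set xs \<subseteq> VT \<and>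
     (\<forall>i<length xs. {xs ! i, xs ! ((i + 1) mod length xs)} \<in> ET))"

definition is_tree :: "'v set \<Rightarrow> 'v set set \<Rightarrow> bool" where
  "is_tree VT ET \<longleftrightarrow> simple_graph VT ET \<and> VT \<noteq> {} \<and> sg_connected VT ET \<and> \<not> has_cycle VT ET"

definition tdeg :: "'v set set \<Rightarrow> 'v \<Rightarrow> nat" where
  "tdeg ET t = card {e\<in>ET. t \<in> e}"

definition is_leaf :: "'v set set \<Rightarrow> 'v \<Rightarrow> bool" where
  "is_leaf ET t \<longleftrightarrow> tdeg ET t = 1"

definition tcols :: "'v set set \<Rightarrow> ('v set \<Rightarrow> nat) \<Rightarrow> 'v \<Rightarrow> nat set" where
  "tcols ET c t = c ` {e\<in>ET. t \<in> e}"

definition dcol :: "'e set \<Rightarrow> ('e \<Rightarrow> 'a set) \<Rightarrow> ('e \<Rightarrow> nat) \<Rightarrow> nat \<Rightarrow> 'a \<Rightarrow> nat" where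
  "dcol E ends \<phi> j v = card {e\<in>E. v \<in> ends e \<and> \<phi> e = j}"

definition T_equitable ::
  "'v set set \<Rightarrow> 'v set \<Rightarrow> 'v set \<Rightarrow> ('v set \<Rightarrow> nat) \<Rightarrow>
   'e set \<Rightarrow> ('e \<Rightarrow> 'a set) \<Rightarrow> 'a set \<Rightarrow> 'a set \<Rightarrow> ('e \<Rightarrow> nat) \<Rightarrow> bool" where
  "T_equitable ET TA TB c E ends A B \<phi> \<longleftrightarrow>
     (\<forall>e\<in>E. \<phi> e \<in> {1..card ET}) \<and>
     (\<forall>v\<in>A. \<forall>t\<in>TA. \<not> is_leaf ET t \<longrightarrow>
        (\<forall>j\<in>tcols ET c t. \<forall>k\<in>tcols ET c t. dcol E ends \<phi> j v = dcol E ends \<phi> k v)) \<and>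
     (\<forall>v\<in>B. \<forall>t\<in>TB. \<not> is_leaf ET t \<longrightarrow>
        (\<forall>j\<in>tcols ET c t. \<forall>k\<in>tcols ET c t. dcol E ends \<phi> j v = dcol E ends \<phi> k v))"

text \<open>Graphs H are taken with vertex and edge type nat; since every finite
  multigraph is isomorphic to one of these, this ranges over all finite
  bipartite multigraphs up to isomorphism. k = b'+1, ms i = m_i, and the
  decomposition H_1..H_k is given by the edge labelling psi.\<close>

definition decomp_property :: "(nat \<Rightarrow> nat \<Rightarrow> nat) \<Rightarrow> bool" where
  "decomp_property f \<longleftrightarrow>
    (\<forall>m' lam k (ms :: nat \<Rightarrow> nat) (V :: nat set) (E :: nat set) (ends :: nat \<Rightarrow> nat set) A B.
       k \<ge> 1 \<and> (\<forall>i\<in>{1..k}. ms i > 0) \<and> m' = (\<Sum>i=1..k. ms i) \<and>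
       bipartite_on V E ends A B \<and> (\<forall>v\<in>A. m' dvd deg E ends v) \<and>
       edge_connected (f m' lam) V E ends
     \<longrightarrow> (\<exists>\<psi> :: nat \<Rightarrow> nat. (\<forall>e\<in>E. \<psi> e \<in> {1..k}) \<and>
            (\<forall>i\<in>{1..k}.
               edge_connected lam V {e\<in>E. \<psi> e = i} ends \<and>
               (\<forall>v\<in>A. m' * deg {e\<in>E. \<psi> e = i} ends v = ms i * deg E ends v) \<and>
               (i < k \<longrightarrow> (\<forall>v\<in>B. ms i dvd deg {e\<in>E. \<psi> e = i} ends v)))))"

end

theory Submission
  imports Defs "HOL-Library.FuncSet"
begin


definition wt :: "'a \<Rightarrow> 'a \<times> 'a \<Rightarrow> int" where
  "wt u xy = of_bool (fst xy = u) - of_bool (snd xy = u)"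

lemma abs_wt: "\<bar>wt u xy\<bar> \<le> 1"
  by (simp add: wt_def)

lemma balanced_orient:
  assumes "finite E"
  shows "\<exists>q. (\<forall>e\<in>E. q e = p e \<or> q e = prod.swap (p e)) \<and> (\<forall>u. \<bar>\<Sum>e\<in>E. wt u (q e)\<bar> \<le> 1)"
  using assms
proof (induction "card E" arbitrary: E p rule: less_induct)
  case less
  show ?case
  proof (cases "\<exists>v e1 e2. e1\<in>E \<and> e2\<in>E \<and> e1\<noteq>e2 \<and> (fst (p e1) = v \<or> snd (p e1) = v) \<and> (fst (p e2) = v \<or> snd (p e2) = v)")
    case True
    then obtain v e1 e2 where e: "e1\<in>E" "e2\<in>E" "e1\<noteq>e2" "fst (p e1) = v \<or> snd (p e1) = v" "fst (p e2) = v \<or> snd (p e2) = v"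
      by blast
    define a where "a = (if fst (p e1) = v then snd (p e1) else fst (p e1))"
    define b where "b = (if fst (p e2) = v then snd (p e2) else fst (p e2))"
    have pa: "p e1 = (v,a) \<or> p e1 = (a,v)" using e(4) unfolding a_def by (cases "p e1") auto
    have pb: "p e2 = (v,b) \<or> p e2 = (b,v)" using e(5) unfolding b_def by (cases "p e2") auto
    define E' where "E' = E - {e2}"
    define p' where "p' = p(e1 := (a,b))"
    have cE: "card E' < card E" unfolding E'_def using e(2) less.prems by (metis card_Diff1_less)
    obtain q' where q': "\<forall>e\<in>E'. q' e = p' e \<or> q' e = prod.swap (p' e)" "\<forall>u. \<bar>\<Sum>e\<in>E'. wt u (q' e)\<bar> \<le> 1"
      using less.hyps[OF cE, of p'] less.prems unfolding E'_def by auto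
    have e1E': "e1 \<in> E'" using e unfolding E'_def by auto
    have q'e1: "q' e1 = (a,b) \<or> q' e1 = (b,a)" using q'(1) e1E' unfolding p'_def by auto
    define X1 where "X1 = (if q' e1 = (a,b) then (a,v) else (v,a))"
    define X2 where "X2 = (if q' e1 = (a,b) then (v,b) else (b,v))"
    define q where "q = q'(e1 := X1, e2 := X2)"
    have key: "wt u X1 + wt u X2 = wt u (q' e1)" for u
      using q'e1 proof
      assume h: "q' e1 = (a,b)"
      show ?thesis unfolding X1_def X2_def wt_def h by auto
    next
      assume h: "q' e1 = (b,a)"
      show ?thesis
      proof (cases "a = b")
        case True then show ?thesis unfolding X1_def X2_def wt_def h by auto
      next
        case False then show ?thesis unfolding X1_def X2_def wt_def h by auto
      qed
    qed
    have fin: "finite (E - {e1, e2})" using less.prems by simp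
    have s1: "(\<Sum>e\<in>E. wt u (q e)) = (\<Sum>e\<in>E - {e1,e2}. wt u (q e)) + wt u (q e1) + wt u (q e2)" for u
    proof -
      have "E = insert e1 (insert e2 (E - {e1,e2}))" using e by auto
      then have "(\<Sum>e\<in>E. wt u (q e)) = (\<Sum>e\<in>insert e1 (insert e2 (E - {e1,e2})). wt u (q e))" by simp
      also have "\<dots> = wt u (q e1) + (wt u (q e2) + (\<Sum>e\<in>E - {e1,e2}. wt u (q e)))"
        using fin e(3) by simp
      finally show ?thesis by simp
    qed
    have s2: "(\<Sum>e\<in>E'. wt u (q' e)) = (\<Sum>e\<in>E - {e1,e2}. wt u (q' e)) + wt u (q' e1)" for u
    proof -
      have "E' = insert e1 (E - {e1,e2})" using e unfolding E'_def by auto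
      then show ?thesis using fin by simp
    qed
    have s3: "(\<Sum>e\<in>E - {e1,e2}. wt u (q e)) = (\<Sum>e\<in>E - {e1,e2}. wt u (q' e))" for u
      by (rule sum.cong) (auto simp: q_def)
    have eqs: "(\<Sum>e\<in>E. wt u (q e)) = (\<Sum>e\<in>E'. wt u (q' e))" for u
      using s1[of u] s2[of u] s3[of u] key[of u] e(3) by (simp add: q_def)
    have valid: "\<forall>e\<in>E. q e = p e \<or> q e = prod.swap (p e)"
    proof
      fix e assume eE: "e \<in> E"
      show "q e = p e \<or> q e = prod.swap (p e)"
      proof (cases "e = e2")
        case True then show ?thesis using pb e(3) unfolding q_def X2_def by auto
      next
        case False
        show ?thesis
        proof (cases "e = e1")
          case True then show ?thesis using pa False unfolding q_def X1_def by auto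
        next
          case False2: False
          then have "e \<in> E'" using eE False unfolding E'_def by auto
          then show ?thesis using q'(1) False False2 unfolding q_def p'_def by auto
        qed
      qed
    qed
    show ?thesis using valid eqs q'(2) by metis
  next
    case False
    have "\<bar>\<Sum>e\<in>E. wt u (p e)\<bar> \<le> 1" for u
    proof -
      define S where "S = {e\<in>E. fst (p e) = u \<or> snd (p e) = u}"
      have "(\<Sum>e\<in>E. wt u (p e)) = (\<Sum>e\<in>S. wt u (p e))"
        by (rule sum.mono_neutral_right) (auto simp: S_def wt_def less.prems)
      moreover have "S = {} \<or> (\<exists>e0. S = {e0})"
        using False unfolding S_def by blast
      ultimately show ?thesis using abs_wt[of u] by (elim disjE exE) auto
    qed
    then show ?thesis by auto
  qed
qed


lemma int_card_filter: "finite E \<Longrightarrow> int (card {e\<in>E. P e}) = (\<Sum>e\<in>E. if P e then 1 else 0)"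
  by (simp add: sum.inter_filter[symmetric])

lemma split2:
  assumes fin: "finite E"
    and pE: "\<forall>e\<in>E. ends e = {fst (p e), snd (p e)} \<and> fst (p e) \<in> A \<and> snd (p e) \<in> B"
    and AB: "A \<inter> B = {}"
  shows "\<exists>\<beta>. \<forall>u. card {e\<in>E. u \<in> ends e \<and> \<beta> e} \<le> card {e\<in>E. u \<in> ends e \<and> \<not> \<beta> e} + 1 \<and>
                 card {e\<in>E. u \<in> ends e \<and> \<not> \<beta> e} \<le> card {e\<in>E. u \<in> ends e \<and> \<beta> e} + 1"
proof -
  obtain q where q: "\<forall>e\<in>E. q e = p e \<or> q e = prod.swap (p e)" "\<forall>u. \<bar>\<Sum>e\<in>E. wt u (q e)\<bar> \<le> 1"
    using balanced_orient[OF fin, of p] by blast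
  define \<beta> where "\<beta> e = (q e = p e)" for e
  have pw: "wt u (q e) = (if u \<in> A then 1 else -1) *
       ((if u \<in> ends e \<and> \<beta> e then 1 else 0) - (if u \<in> ends e \<and> \<not> \<beta> e then 1 else 0))"
    if eE: "e \<in> E" for e u
  proof -
    obtain x y where pe: "p e = (x,y)" by (cases "p e")
    have xy: "ends e = {x,y}" "x \<in> A" "y \<in> B" using pE eE pe by auto
    then have "x \<noteq> y" using AB by auto
    have hy: "y \<notin> A" using xy AB by auto
    have "q e = (x,y) \<or> q e = (y,x)" using q(1) eE pe by auto
    then show ?thesis
    proof
      assume h: "q e = (x,y)"
      then have "\<beta> e" using pe unfolding \<beta>_def by simp
      then show ?thesis using h xy(1,2) hy \<open>x \<noteq> y\<close> unfolding wt_def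
        by (cases "u = x"; cases "u = y"; simp)
    next
      assume h: "q e = (y,x)"
      then have "\<not> \<beta> e" using pe \<open>x \<noteq> y\<close> unfolding \<beta>_def by simp
      then show ?thesis using h xy(1,2) hy \<open>x \<noteq> y\<close> unfolding wt_def
        by (cases "u = x"; cases "u = y"; simp)
    qed
  qed
  have hb: "\<bar>int (card {e\<in>E. u \<in> ends e \<and> \<beta> e}) - int (card {e\<in>E. u \<in> ends e \<and> \<not> \<beta> e})\<bar> \<le> 1" for u
  proof -
    define s :: int where "s = (if u \<in> A then 1 else -1)"
    have "(\<Sum>e\<in>E. wt u (q e)) = (\<Sum>e\<in>E. s * ((if u \<in> ends e \<and> \<beta> e then 1 else 0) - (if u \<in> ends e \<and> \<not> \<beta> e then 1 else 0)))"
      by (rule sum.cong) (simp_all add: pw s_def)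
    also have "\<dots> = s * ((\<Sum>e\<in>E. if u \<in> ends e \<and> \<beta> e then 1 else 0) - (\<Sum>e\<in>E. if u \<in> ends e \<and> \<not> \<beta> e then 1 else 0))"
      by (simp only: sum_distrib_left[symmetric] sum_subtractf)
    also have "\<dots> = s * (int (card {e\<in>E. u \<in> ends e \<and> \<beta> e}) - int (card {e\<in>E. u \<in> ends e \<and> \<not> \<beta> e}))"
      by (simp only: int_card_filter[OF fin])
    finally have "\<bar>s * (int (card {e\<in>E. u \<in> ends e \<and> \<beta> e}) - int (card {e\<in>E. u \<in> ends e \<and> \<not> \<beta> e}))\<bar> \<le> 1"
      using q(2)[rule_format, of u] by simp
    then show ?thesis unfolding s_def by (cases "u \<in> A") auto
  qed
  show ?thesis
  proof (intro exI[of _ \<beta>] allI conjI)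
    fix u
    show "card {e\<in>E. u \<in> ends e \<and> \<beta> e} \<le> card {e\<in>E. u \<in> ends e \<and> \<not> \<beta> e} + 1"
      using hb[of u] by linarith
    show "card {e\<in>E. u \<in> ends e \<and> \<not> \<beta> e} \<le> card {e\<in>E. u \<in> ends e \<and> \<beta> e} + 1"
      using hb[of u] by linarith
  qed
qed

lemma sq_le:
  fixes x y a b :: nat
  assumes "x+y = a+b" "x \<le> y+1" "y \<le> x+1"
  shows "x^2+y^2 \<le> a^2+b^2"
proof -
  have e: "2*(int x^2+int y^2) = (int x+int y)^2 + (int x-int y)^2" "2*(int a^2+int b^2) = (int a+int b)^2 + (int a-int b)^2"
    by (simp_all add: power2_eq_square algebra_simps)
  have "(int x-int y)^2 \<le> (int a-int b)^2"
  proof (cases "a = b")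
    case True then have "x = y" using assms by presburger
    then show ?thesis by simp
  next
    case False
    then have "1 \<le> \<bar>int a - int b\<bar>" by linarith
    then have "1 \<le> (int a - int b)^2" by (metis abs_ge_self abs_le_square_iff abs_one le_numeral_extra(1) one_le_power order_trans power2_abs)
    moreover have "int x - int y = -1 \<or> int x - int y = 0 \<or> int x - int y = 1" using assms by linarith
  then have "(int x-int y)^2 \<le> 1" by auto
    ultimately show ?thesis by linarith
  qed
  then have "int x^2+int y^2 \<le> int a^2+int b^2" using e assms(1) by (smt (verit) of_nat_add)
  then show ?thesis by (metis of_nat_add of_nat_le_iff of_nat_power)
qed
lemma sq_less:
  fixes x y a b :: nat
  assumes "x+y = a+b" "x \<le> y+1" "y \<le> x+1" "b+1 < a"
  shows "x^2+y^2 < a^2+b^2"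
proof -
  have e: "2*(int x^2+int y^2) = (int x+int y)^2 + (int x-int y)^2" "2*(int a^2+int b^2) = (int a+int b)^2 + (int a-int b)^2"
    by (simp_all add: power2_eq_square algebra_simps)
  have "2 \<le> int a - int b" using assms by linarith
  then have "2*2 \<le> (int a - int b)*(int a - int b)" by (intro mult_mono) auto
  then have "4 \<le> (int a - int b)^2" by (simp add: power2_eq_square)
  moreover have "int x - int y = -1 \<or> int x - int y = 0 \<or> int x - int y = 1" using assms by linarith
  then have "(int x-int y)^2 \<le> 1" by auto
  ultimately have "int x^2+int y^2 < int a^2+int b^2" using e assms(1) by (smt (verit) of_nat_add)
  then show ?thesis by (metis of_nat_add of_nat_less_iff of_nat_power)
qed

lemma sum_two:
  fixes f :: "nat \<Rightarrow> nat"
  assumes "i < r" "j < r" "i \<noteq> j"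
  shows "(\<Sum>k<r. f k) = (\<Sum>k\<in>{..<r}-{i,j}. f k) + f i + f j"
proof -
  have "{..<r} = insert i (insert j ({..<r}-{i,j}))" using assms by auto
  then have "(\<Sum>k<r. f k) = (\<Sum>k\<in>insert i (insert j ({..<r}-{i,j})). f k)" by simp
  also have "\<dots> = f i + (f j + (\<Sum>k\<in>{..<r}-{i,j}. f k))" using assms by simp
  finally show ?thesis by simp
qed

lemma equitable:
  fixes E :: "'e set" and ends :: "'e \<Rightarrow> 'a set" and p :: "'e \<Rightarrow> 'a \<times> 'a"
  assumes fin: "finite E"
    and pE: "\<forall>e\<in>E. ends e = {fst (p e), snd (p e)} \<and> fst (p e) \<in> A \<and> snd (p e) \<in> B"
    and AB: "A \<inter> B = {}" and r: "0 < r"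
  shows "\<exists>\<phi>. (\<forall>e\<in>E. \<phi> e < r) \<and> (\<forall>v i j. i < r \<longrightarrow> j < r \<longrightarrow> dcol E ends \<phi> i v \<le> dcol E ends \<phi> j v + 1)"
proof -
  define V0 where "V0 = (\<lambda>e. fst (p e)) ` E \<union> (\<lambda>e. snd (p e)) ` E"
  have finV0: "finite V0" using fin by (simp add: V0_def)
  define S where "S \<phi> = (\<Sum>u\<in>V0. \<Sum>k<r. (dcol E ends \<phi> k u)^2)" for \<phi> :: "'e \<Rightarrow> nat"
  define \<Phi> where "\<Phi> = PiE E (\<lambda>_. {..<r})"
  have fin\<Phi>: "finite \<Phi>" by (simp add: \<Phi>_def finite_PiE fin)
  have ne\<Phi>: "(\<lambda>e\<in>E. 0) \<in> \<Phi>" using r by (simp add: \<Phi>_def)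
  obtain \<phi> where \<phi>\<Phi>: "\<phi> \<in> \<Phi>" and \<phi>min: "S \<phi> = Min (S ` \<Phi>)"
  proof -
    have "Min (S ` \<Phi>) \<in> S ` \<Phi>" using Min_in[of "S ` \<Phi>"] fin\<Phi> ne\<Phi> by blast
    then show ?thesis using that by (metis imageE)
  qed
  have \<phi>le: "S \<phi> \<le> S \<psi>" if "\<psi> \<in> \<Phi>" for \<psi>
    using \<phi>min Min_le[of "S ` \<Phi>" "S \<psi>"] fin\<Phi> that by auto
  show ?thesis
  proof (intro exI[of _ \<phi>] conjI allI impI)
    show "\<forall>e\<in>E. \<phi> e < r" using \<phi>\<Phi> by (auto simp: \<Phi>_def PiE_def Pi_def)
    fix v i j assume ir: "i < r" and jr: "j < r"
    show "dcol E ends \<phi> i v \<le> dcol E ends \<phi> j v + 1"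
    proof (rule ccontr)
      assume "\<not> ?thesis"
      then have big: "dcol E ends \<phi> j v + 1 < dcol E ends \<phi> i v" by simp
      then have ij: "i \<noteq> j" by auto
      define Eij where "Eij = {e\<in>E. \<phi> e = i \<or> \<phi> e = j}"
      have finEij: "finite Eij" using fin by (simp add: Eij_def)
      obtain \<beta> where \<beta>: "\<forall>u. card {e\<in>Eij. u \<in> ends e \<and> \<beta> e} \<le> card {e\<in>Eij. u \<in> ends e \<and> \<not> \<beta> e} + 1 \<and>
                 card {e\<in>Eij. u \<in> ends e \<and> \<not> \<beta> e} \<le> card {e\<in>Eij. u \<in> ends e \<and> \<beta> e} + 1"
        using split2[OF finEij, of ends p A B] pE AB unfolding Eij_def by auto
      define \<psi> where "\<psi> e = (if e \<in> Eij then (if \<beta> e then i else j) else \<phi> e)" for e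
      have \<psi>\<Phi>: "\<psi> \<in> \<Phi>" using \<phi>\<Phi> ir jr unfolding \<Phi>_def \<psi>_def PiE_def Pi_def extensional_def Eij_def by auto
      have c_other: "dcol E ends \<psi> k u = dcol E ends \<phi> k u" if "k \<noteq> i" "k \<noteq> j" for k u
        unfolding dcol_def by (rule arg_cong[where f=card]) (use that in \<open>auto simp: \<psi>_def Eij_def\<close>)
      have c_i: "dcol E ends \<psi> i u = card {e\<in>Eij. u \<in> ends e \<and> \<beta> e}" for u
        unfolding dcol_def by (rule arg_cong[where f=card]) (use ij in \<open>auto simp: \<psi>_def Eij_def\<close>)
      have c_j: "dcol E ends \<psi> j u = card {e\<in>Eij. u \<in> ends e \<and> \<not> \<beta> e}" for u
        unfolding dcol_def by (rule arg_cong[where f=card]) (use ij in \<open>auto simp: \<psi>_def Eij_def\<close>)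
      have c_sum: "dcol E ends \<phi> i u + dcol E ends \<phi> j u = card {e\<in>Eij. u \<in> ends e \<and> \<beta> e} + card {e\<in>Eij. u \<in> ends e \<and> \<not> \<beta> e}" for u
      proof -
        have "card {e\<in>Eij. u \<in> ends e} = card ({e\<in>E. u \<in> ends e \<and> \<phi> e = i} \<union> {e\<in>E. u \<in> ends e \<and> \<phi> e = j})"
          by (rule arg_cong[where f=card]) (auto simp: Eij_def)
        also have "\<dots> = dcol E ends \<phi> i u + dcol E ends \<phi> j u"
          unfolding dcol_def by (rule card_Un_disjoint) (use fin ij in auto)
        finally have 1: "card {e\<in>Eij. u \<in> ends e} = dcol E ends \<phi> i u + dcol E ends \<phi> j u" .
        have "card {e\<in>Eij. u \<in> ends e} = card ({e\<in>Eij. u \<in> ends e \<and> \<beta> e} \<union> {e\<in>Eij. u \<in> ends e \<and> \<not> \<beta> e})"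
          by (rule arg_cong[where f=card]) auto
        also have "\<dots> = card {e\<in>Eij. u \<in> ends e \<and> \<beta> e} + card {e\<in>Eij. u \<in> ends e \<and> \<not> \<beta> e}"
          by (rule card_Un_disjoint) (use finEij in auto)
        finally show ?thesis using 1 by simp
      qed
      have inner: "(\<Sum>k<r. (dcol E ends \<psi> k u)^2) \<le> (\<Sum>k<r. (dcol E ends \<phi> k u)^2)" for u
      proof -
        have "(\<Sum>k\<in>{..<r}-{i,j}. (dcol E ends \<psi> k u)^2) = (\<Sum>k\<in>{..<r}-{i,j}. (dcol E ends \<phi> k u)^2)"
          by (rule sum.cong) (auto simp: c_other)
        moreover have "(dcol E ends \<psi> i u)^2 + (dcol E ends \<psi> j u)^2 \<le> (dcol E ends \<phi> i u)^2 + (dcol E ends \<phi> j u)^2"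
          using sq_le[of "dcol E ends \<psi> i u" "dcol E ends \<psi> j u" "dcol E ends \<phi> i u" "dcol E ends \<phi> j u"]
            c_i c_j c_sum \<beta> by metis
        ultimately show ?thesis
          using sum_two[OF ir jr ij, of "\<lambda>k. (dcol E ends \<psi> k u)^2"] sum_two[OF ir jr ij, of "\<lambda>k. (dcol E ends \<phi> k u)^2"]
          by linarith
      qed
      have inner_v: "(\<Sum>k<r. (dcol E ends \<psi> k v)^2) < (\<Sum>k<r. (dcol E ends \<phi> k v)^2)"
      proof -
        have "(\<Sum>k\<in>{..<r}-{i,j}. (dcol E ends \<psi> k v)^2) = (\<Sum>k\<in>{..<r}-{i,j}. (dcol E ends \<phi> k v)^2)"
          by (rule sum.cong) (auto simp: c_other)
        moreover have "(dcol E ends \<psi> i v)^2 + (dcol E ends \<psi> j v)^2 < (dcol E ends \<phi> i v)^2 + (dcol E ends \<phi> j v)^2"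
          using sq_less[of "dcol E ends \<psi> i v" "dcol E ends \<psi> j v" "dcol E ends \<phi> i v" "dcol E ends \<phi> j v"]
            c_i c_j c_sum \<beta> big by metis
        ultimately show ?thesis
          using sum_two[OF ir jr ij, of "\<lambda>k. (dcol E ends \<psi> k v)^2"] sum_two[OF ir jr ij, of "\<lambda>k. (dcol E ends \<phi> k v)^2"]
          by linarith
      qed
      have vV0: "v \<in> V0"
      proof -
        have "{e\<in>E. v \<in> ends e \<and> \<phi> e = i} \<noteq> {}" using big unfolding dcol_def by (metis card.empty not_less_zero)
        then obtain e where "e \<in> E" "v \<in> ends e" by auto
        then show ?thesis using pE unfolding V0_def by auto
      qed
      have "S \<psi> < S \<phi>" unfolding S_def
        by (rule sum_strict_mono_ex1) (use finV0 inner inner_v vV0 in auto)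
      then show False using \<phi>le[OF \<psi>\<Phi>] by simp
    qed
  qed
qed


lemma sum_dcol:
  assumes fin: "finite E" and \<phi>: "\<forall>e\<in>E. \<phi> e < r"
  shows "(\<Sum>i<r. dcol E ends \<phi> i v) = deg E ends v"
proof -
  have "{e\<in>E. v \<in> ends e} = (\<Union>i\<in>{..<r}. {e\<in>E. v \<in> ends e \<and> \<phi> e = i})" using \<phi> by auto
  then have "deg E ends v = card (\<Union>i\<in>{..<r}. {e\<in>E. v \<in> ends e \<and> \<phi> e = i})" unfolding deg_def by simp
  also have "\<dots> = (\<Sum>i<r. card {e\<in>E. v \<in> ends e \<and> \<phi> e = i})"
    by (rule card_UN_disjoint) (use fin in auto)
  finally show ?thesis unfolding dcol_def by simp
qed

lemma exact_split:
  fixes E :: "'e set" and ends :: "'e \<Rightarrow> 'a set" and p :: "'e \<Rightarrow> 'a \<times> 'a"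
  assumes fin: "finite E"
    and pE: "\<forall>e\<in>E. ends e = {fst (p e), snd (p e)} \<and> fst (p e) \<in> A \<and> snd (p e) \<in> B"
    and AB: "A \<inter> B = {}" and r: "0 < r"
    and dv: "\<forall>v. r dvd deg E ends v"
  shows "\<exists>\<phi>. (\<forall>e\<in>E. \<phi> e < r) \<and> (\<forall>v i. i < r \<longrightarrow> r * dcol E ends \<phi> i v = deg E ends v)"
proof -
  obtain \<phi> where \<phi>: "\<forall>e\<in>E. \<phi> e < r" "\<forall>v i j. i < r \<longrightarrow> j < r \<longrightarrow> dcol E ends \<phi> i v \<le> dcol E ends \<phi> j v + 1"
    using equitable[OF fin pE AB r] by blast
  have "r * dcol E ends \<phi> i v = deg E ends v" if ir: "i < r" for v i
  proof -
    define q where "q = deg E ends v div r"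
    have dq: "deg E ends v = r * q" using dv unfolding q_def by auto
    have s: "(\<Sum>k<r. dcol E ends \<phi> k v) = r * q" using sum_dcol[OF fin \<phi>(1), of ends v] dq by linarith
    have s2: "(\<Sum>k<r. dcol E ends \<phi> k v) = dcol E ends \<phi> i v + (\<Sum>k\<in>{..<r}-{i}. dcol E ends \<phi> k v)"
      using ir by (simp add: sum.remove)
    have cr: "card ({..<r}-{i}) = r - 1" using ir by simp
    have "\<not> q < dcol E ends \<phi> i v"
    proof
      assume a: "q < dcol E ends \<phi> i v"
      have "\<forall>k\<in>{..<r}-{i}. q \<le> dcol E ends \<phi> k v"
      proof
        fix k assume "k \<in> {..<r}-{i}"
        then have "dcol E ends \<phi> i v \<le> dcol E ends \<phi> k v + 1" using \<phi>(2) ir by auto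
        then show "q \<le> dcol E ends \<phi> k v" using a by linarith
      qed
      then have "(r-1) * q \<le> (\<Sum>k\<in>{..<r}-{i}. dcol E ends \<phi> k v)"
        using sum_bounded_below[of "{..<r}-{i}" q "\<lambda>k. dcol E ends \<phi> k v"] cr by simp
      moreover have "r*q = q + (r-1)*q" using r by (cases r) auto
      ultimately show False using s s2 a by linarith
    qed
    moreover have "\<not> dcol E ends \<phi> i v < q"
    proof
      assume a: "dcol E ends \<phi> i v < q"
      have "\<forall>k\<in>{..<r}-{i}. dcol E ends \<phi> k v \<le> q"
      proof
        fix k assume "k \<in> {..<r}-{i}"
        then have "dcol E ends \<phi> k v \<le> dcol E ends \<phi> i v + 1" using \<phi>(2) ir by auto
        then show "dcol E ends \<phi> k v \<le> q" using a by linarith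
      qed
      then have "(\<Sum>k\<in>{..<r}-{i}. dcol E ends \<phi> k v) \<le> (r-1) * q"
        using sum_bounded_above[of "{..<r}-{i}" "\<lambda>k. dcol E ends \<phi> k v" q] cr by simp
      moreover have "r*q = q + (r-1)*q" using r by (cases r) auto
      ultimately show False using s s2 a by linarith
    qed
    ultimately show ?thesis using dq by simp
  qed
  then show ?thesis using \<phi>(1) by blast
qed



lemma mindeg:
  assumes ec: "edge_connected k V E ends" and v: "v \<in> V"
  shows "k \<le> deg E ends v"
proof (rule ccontr)
  assume "\<not> k \<le> deg E ends v"
  then have lt: "card {e\<in>E. v \<in> ends e} < k" unfolding deg_def by simp
  have cV: "card V > 1" and mc: "mg_connected V (E - {e\<in>E. v \<in> ends e}) ends"
    using ec lt unfolding edge_connected_def by auto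
  have "\<exists>u\<in>V. u \<noteq> v"
  proof (rule ccontr)
    assume "\<not> ?thesis"
    then have "V \<subseteq> {v}" by auto
    then have "card V \<le> card {v}" by (intro card_mono) auto
    then have "card V \<le> 1" by simp
    then show False using cV by simp
  qed
  then obtain u where u: "u \<in> V" "u \<noteq> v" by blast
  then have "(\<lambda>x y. \<exists>e\<in>E - {e\<in>E. v \<in> ends e}. ends e = {x, y})\<^sup>*\<^sup>* v u"
    using mc v unfolding mg_connected_def by blast
  then show False
  proof (cases rule: converse_rtranclpE)
    case base then show ?thesis using u by simp
  next
    case (step y) then show ?thesis by auto
  qed
qed

lemma transfer_card:
  assumes hv: "bij_betw hv V' V" and he: "bij_betw he E' E"
    and ends': "\<forall>e'\<in>E'. ends (he e') = hv ` ends' e' \<and> ends' e' \<subseteq> V'" and u: "u \<in> V'"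
  shows "card {e'\<in>E'. u \<in> ends' e' \<and> Q (he e')} = card {e\<in>E. hv u \<in> ends e \<and> Q e}"
proof -
  have injv: "inj_on hv V'" and inje: "inj_on he E'" and imE: "he ` E' = E"
    using hv he by (auto simp: bij_betw_def)
  have im: "he ` {e'\<in>E'. u \<in> ends' e' \<and> Q (he e')} = {e\<in>E. hv u \<in> ends e \<and> Q e}"
  proof (intro equalityI subsetI)
    fix e assume "e \<in> he ` {e'\<in>E'. u \<in> ends' e' \<and> Q (he e')}"
    then obtain e' where e': "e = he e'" "e' \<in> E'" "u \<in> ends' e'" "Q (he e')" by blast
    have en: "ends (he e') = hv ` ends' e'" using bspec[OF ends' e'(2)] by (rule conjunct1)
    have "e \<in> E" using e' imE by blast
    moreover have "hv u \<in> ends e" unfolding e'(1) en using e'(3) by (rule imageI)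
    ultimately show "e \<in> {e\<in>E. hv u \<in> ends e \<and> Q e}" using e' by simp
  next
    fix e assume a: "e \<in> {e\<in>E. hv u \<in> ends e \<and> Q e}"
    then obtain e' where e': "e' \<in> E'" "e = he e'" using imE by blast
    have en: "ends (he e') = hv ` ends' e'" "ends' e' \<subseteq> V'" using bspec[OF ends' e'(1)] by auto
    have "hv u \<in> hv ` ends' e'" using a e'(2) en(1) by simp
    then have "u \<in> ends' e'" using injv u en(2) by (simp add: inj_on_image_mem_iff)
    then show "e \<in> he ` {e'\<in>E'. u \<in> ends' e' \<and> Q (he e')}" using a e' by blast
  qed
  have inj: "inj_on he {e'\<in>E'. u \<in> ends' e' \<and> Q (he e')}" using inje by (rule inj_on_subset) auto
  show ?thesis using card_image[OF inj] unfolding im by simp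
qed

lemma transfer_ec:
  assumes hv: "bij_betw hv V' V" and he: "bij_betw he E' E"
    and ends': "\<forall>e'\<in>E'. ends (he e') = hv ` ends' e' \<and> ends' e' \<subseteq> V'"
    and mg: "\<forall>e\<in>E. ends e \<subseteq> V"
    and ec: "edge_connected k V E ends"
  shows "edge_connected k V' E' ends'"
  unfolding edge_connected_def
proof (intro conjI allI impI)
  have injv: "inj_on hv V'" and inje: "inj_on he E'" and imE: "he ` E' = E" and imV: "hv ` V' = V"
    using hv he by (auto simp: bij_betw_def)
  show "1 < card V'" using ec bij_betw_same_card[OF hv] unfolding edge_connected_def by simp
  fix F' assume F': "F' \<subseteq> E'" "card F' < k"
  define F where "F = he ` F'"
  have "card F = card F'" unfolding F_def using inj_on_subset[OF inje F'(1)] by (simp add: card_image)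
  moreover have "F \<subseteq> E" using F' imE unfolding F_def by auto
  ultimately have mc: "mg_connected V (E - F) ends" using ec F' unfolding edge_connected_def by auto
  define hvi where "hvi = inv_into V' hv"
  have hvi1: "hvi (hv x) = x" if "x \<in> V'" for x using injv that unfolding hvi_def by simp
  have hvi2: "hv (hvi y) = y" "hvi y \<in> V'" if "y \<in> V" for y using imV that unfolding hvi_def
    by (auto simp: f_inv_into_f inv_into_into)
  show "mg_connected V' (E' - F') ends'"
    unfolding mg_connected_def
  proof (intro ballI)
    fix u' v' assume u': "u' \<in> V'" and v': "v' \<in> V'"
    have path: "(\<lambda>x y. \<exists>e\<in>E - F. ends e = {x, y})\<^sup>*\<^sup>* (hv u') (hv v')"
      using mc u' v' imV unfolding mg_connected_def by auto
    have "y \<in> V \<longrightarrow> (\<lambda>x y. \<exists>e\<in>E' - F'. ends' e = {x, y})\<^sup>*\<^sup>* u' (hvi y)" if "(\<lambda>x y. \<exists>e\<in>E - F. ends e = {x, y})\<^sup>*\<^sup>* (hv u') y" for y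
      using that
    proof (induction rule: rtranclp_induct)
      case base then show ?case using hvi1[OF u'] by simp
    next
      case (step y z)
      then obtain e where e: "e \<in> E - F" "ends e = {y, z}" by auto
      then have yz: "y \<in> V" "z \<in> V" using mg by auto
      obtain e' where e': "e' \<in> E'" "e = he e'" using e imE by auto
      have "e' \<notin> F'" using e e' unfolding F_def by auto
      have "ends' e' = hvi ` ends (he e')"
      proof -
        have "hvi ` ends (he e') = hvi ` hv ` ends' e'" using ends' e' by simp
        also have "\<dots> = ends' e'" using ends' e' hvi1 by (force simp: image_image)
        finally show ?thesis by simp
      qed
      then have "ends' e' = {hvi y, hvi z}" using e e' by simp
      then have st: "(\<lambda>x y. \<exists>e\<in>E' - F'. ends' e = {x, y}) (hvi y) (hvi z)" using \<open>e' \<notin> F'\<close> e' by auto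
      have "(\<lambda>x y. \<exists>e\<in>E' - F'. ends' e = {x, y})\<^sup>*\<^sup>* u' (hvi y)" using step yz by simp
      then have "(\<lambda>x y. \<exists>e\<in>E' - F'. ends' e = {x, y})\<^sup>*\<^sup>* u' (hvi z)" using st by (rule rtranclp.rtrancl_into_rtrancl)
      then show ?case by simp
    qed
    from this[OF path] show "(\<lambda>x y. \<exists>e\<in>E' - F'. ends' e = {x, y})\<^sup>*\<^sup>* u' v'"
      using hvi1[OF v'] imV v' by auto
  qed
qed



theorem theorem14:
  fixes VT :: "'v set" and ET :: "'v set set" and TA TB :: "'v set"
    and c :: "'v set \<Rightarrow> nat" and m :: nat
    and f :: "nat \<Rightarrow> nat \<Rightarrow> nat" and d :: nat
    and V :: "'a set" and E :: "'e set" and ends :: "'e \<Rightarrow> 'a set" and A B :: "'a set"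
  assumes tree: "is_tree VT ET"
    and m_def: "m = card ET"
    and TAB: "TA \<union> TB = VT" "TA \<inter> TB = {}" "\<forall>e\<in>ET. \<exists>x\<in>TA. \<exists>y\<in>TB. e = {x, y}"
    and leaf_TB: "\<exists>t\<in>TB. is_leaf ET t"
    and colT: "bij_betw c ET {1..m}"
    and f: "decomp_property f"
    and bip: "bipartite_on V E ends A B"
    and divA: "\<forall>v\<in>A. m dvd deg E ends v"
    and conn: "edge_connected (f m (m * d)) V E ends"
  shows "\<exists>\<phi>. T_equitable ET TA TB c E ends A B \<phi> \<and>
           (\<forall>v\<in>V. \<forall>j\<in>{1..m}. dcol E ends \<phi> j v \<ge> d)"
proof -
  have mgG: "multigraph V E ends" and ABV: "A \<union> B = V" "A \<inter> B = {}"
    and eAB: "\<forall>e\<in>E. \<exists>a\<in>A. \<exists>b\<in>B. ends e = {a, b}"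
    using bip unfolding bipartite_on_def by auto
  have finV: "finite V" and finE: "finite E" and endsV: "\<forall>e\<in>E. ends e \<subseteq> V"
    using mgG unfolding multigraph_def by auto
  have "\<forall>e\<in>E. \<exists>ab. ends e = {fst ab, snd ab} \<and> fst ab \<in> A \<and> snd ab \<in> B"
    using eAB by fastforce
  from bchoice[OF this] obtain p where pE: "\<forall>e\<in>E. ends e = {fst (p e), snd (p e)} \<and> fst (p e) \<in> A \<and> snd (p e) \<in> B"
    by blast
  have finVT: "finite VT" and ETsub: "ET \<subseteq> {{x, y} | x y. x \<in> VT \<and> y \<in> VT \<and> x \<noteq> y}"
    and conT: "sg_connected VT ET"
    using tree unfolding is_tree_def simple_graph_def by auto
  have finET: "finite ET"
  proof -
    have "ET \<subseteq> Pow VT" using ETsub by auto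
    then show ?thesis using finVT by (meson finite_Pow_iff finite_subset)
  qed
  obtain t0 where t0: "t0 \<in> TB" "is_leaf ET t0" using leaf_TB by blast
  have finTB: "finite TB" using finVT TAB(1) by (metis finite_Un)
  have one_TB: "t1 = t2" if h: "e \<in> ET" "t1 \<in> TB" "t2 \<in> TB" "t1 \<in> e" "t2 \<in> e" for e t1 t2
  proof -
    obtain x y where "x \<in> TA" "y \<in> TB" "e = {x, y}" using bspec[OF TAB(3) h(1)] by (elim bexE)
    then show ?thesis using h TAB(2) by auto
  qed
  have ex_TB: "\<exists>t\<in>TB. t \<in> e" if h: "e \<in> ET" for e
  proof -
    obtain x y where "x \<in> TA" "y \<in> TB" "e = {x, y}" using bspec[OF TAB(3) h] by (elim bexE)
    then show ?thesis by auto
  qed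
  have m1: "1 \<le> m"
  proof -
    have "card {e\<in>ET. t0 \<in> e} = 1" using t0 unfolding is_leaf_def tdeg_def by simp
    then have "{e\<in>ET. t0 \<in> e} \<noteq> {}" by (metis card.empty zero_neq_one)
    then have "ET \<noteq> {}" by auto
    then show ?thesis using finET m_def by (simp add: Suc_le_eq card_gt_0_iff)
  qed
  have star_pos: "1 \<le> tdeg ET t" if htb: "t \<in> TB" for t
  proof -
    have "card {e\<in>ET. t0 \<in> e} = 1" using t0 unfolding is_leaf_def tdeg_def by simp
    then have "{e\<in>ET. t0 \<in> e} \<noteq> {}" by (metis card.empty zero_neq_one)
    then obtain e0 where e0: "e0 \<in> ET" by auto
    then have "e0 \<in> {{x, y} | x y. x \<in> VT \<and> y \<in> VT \<and> x \<noteq> y}" using ETsub by (rule subsetD[rotated])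
    then obtain x y where xy: "e0 = {x, y}" "x \<in> VT" "y \<in> VT" "x \<noteq> y" by blast
    obtain w where w: "w \<in> VT" "w \<noteq> t" using xy by metis
    have tV: "t \<in> VT" using htb TAB(1) by blast
    have "(\<lambda>x y. {x, y} \<in> ET)\<^sup>*\<^sup>* t w" using conT tV w(1) unfolding sg_connected_def by blast
    then obtain z where "{t, z} \<in> ET"
    proof (cases rule: converse_rtranclpE)
      case base then show ?thesis using w by simp
    next
      case (step z) then show ?thesis using that by blast
    qed
    then have "{e\<in>ET. t \<in> e} \<noteq> {}" by blast
    then have "card {e\<in>ET. t \<in> e} \<noteq> 0" using finET by simp
    then show ?thesis unfolding tdeg_def by simp
  qed
  have sum_TB: "(\<Sum>t\<in>TB. tdeg ET t) = m"
  proof -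
    have "ET = (\<Union>t\<in>TB. {e\<in>ET. t \<in> e})" using ex_TB by blast
    then have "m = card (\<Union>t\<in>TB. {e\<in>ET. t \<in> e})" using m_def by simp
    also have "\<dots> = (\<Sum>t\<in>TB. card {e\<in>ET. t \<in> e})"
    proof (rule card_UN_disjoint)
      show "finite TB" by (rule finTB)
      show "\<forall>i\<in>TB. finite {e\<in>ET. i \<in> e}" using finET by simp
      show "\<forall>i\<in>TB. \<forall>j\<in>TB. i \<noteq> j \<longrightarrow> {e\<in>ET. i \<in> e} \<inter> {e\<in>ET. j \<in> e} = {}"
        using one_TB by blast
    qed
    finally show ?thesis unfolding tdeg_def by simp
  qed
  have cinj: "inj_on c ET" and cim: "c ` ET = {1..m}" using colT by (auto simp: bij_betw_def)
  have tcols_card: "card (tcols ET c t) = tdeg ET t" for t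
  proof -
    have "inj_on c {e\<in>ET. t \<in> e}" using cinj by (rule inj_on_subset) auto
    then show ?thesis unfolding tcols_def tdeg_def by (rule card_image)
  qed
  have tcols_sub: "tcols ET c t \<subseteq> {1..m}" for t
    using cim unfolding tcols_def by auto
  have tcols_uniq: "t1 = t2" if h: "t1 \<in> TB" "t2 \<in> TB" "j \<in> tcols ET c t1" "j \<in> tcols ET c t2" for t1 t2 j
  proof -
    obtain e1 where e1: "e1 \<in> ET" "t1 \<in> e1" "j = c e1" using h(3) unfolding tcols_def by blast
    obtain e2 where e2: "e2 \<in> ET" "t2 \<in> e2" "j = c e2" using h(4) unfolding tcols_def by blast
    have "e1 = e2" using cinj e1 e2 by (metis inj_onD)
    then show ?thesis using one_TB[OF e1(1) h(1,2) e1(2)] e2(2) by blast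
  qed
  have tcols_cover: "\<exists>t\<in>TB. j \<in> tcols ET c t" if h: "j \<in> {1..m}" for j
  proof -
    obtain e where e: "e \<in> ET" "j = c e" using h cim by (metis imageE)
    obtain t where "t \<in> TB" "t \<in> e" using ex_TB[OF e(1)] by blast
    then show ?thesis using e unfolding tcols_def by blast
  qed
  define k where "k = card TB"
  have k1: "1 \<le> k" using t0(1) finTB unfolding k_def by (metis One_nat_def Suc_leI card_gt_0_iff empty_iff)
  obtain h where h: "bij_betw h {0..<card (TB - {t0})} (TB - {t0})"
    using ex_bij_betw_nat_finite finTB by blast
  have ck: "card (TB - {t0}) = k - 1" using t0(1) finTB unfolding k_def by simp
  define g where "g i = (if i = k then t0 else h (i - 1))" for i
  have g_in: "g i \<in> TB" if "i \<in> {1..k}" for i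
  proof (cases "i = k")
    case True then show ?thesis using t0 by (simp add: g_def)
  next
    case False
    then have "i - 1 \<in> {0..<card (TB - {t0})}" using that ck by auto
    then show ?thesis using h False unfolding g_def bij_betw_def by auto
  qed
  have g_inj: "inj_on g {1..k}"
  proof (rule inj_onI)
    fix i j assume i: "i \<in> {1..k}" and j: "j \<in> {1..k}" and eq: "g i = g j"
    have hne: "h (x - 1) \<noteq> t0" if "x \<in> {1..k}" "x \<noteq> k" for x
    proof -
      have "x - 1 \<in> {0..<card (TB - {t0})}" using that ck by auto
      then show ?thesis using h unfolding bij_betw_def by auto
    qed
    show "i = j"
    proof (cases "i = k"; cases "j = k")
      assume "i \<noteq> k" "j \<noteq> k"
      then have "h (i - 1) = h (j - 1)" using eq by (simp add: g_def)
      moreover have "i - 1 \<in> {0..<card (TB - {t0})}" "j - 1 \<in> {0..<card (TB - {t0})}"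
        using i j ck \<open>i \<noteq> k\<close> \<open>j \<noteq> k\<close> by auto
      ultimately have "i - 1 = j - 1" using h unfolding bij_betw_def by (metis inj_onD)
      then show ?thesis using i j by auto
    qed (use eq hne i j in \<open>auto simp: g_def\<close>)
  qed
  have g_bij: "bij_betw g {1..k} TB"
  proof -
    have "g ` {1..k} \<subseteq> TB" using g_in by blast
    moreover have "card (g ` {1..k}) = card TB" using g_inj by (simp add: card_image k_def)
    ultimately have "g ` {1..k} = TB" using finTB by (metis card_subset_eq)
    then show ?thesis using g_inj unfolding bij_betw_def by blast
  qed
  have gk: "g k = t0" by (simp add: g_def)
  define ms where "ms i = tdeg ET (g i)" for i
  have ms_pos: "\<forall>i\<in>{1..k}. 0 < ms i" using star_pos g_in unfolding ms_def by (metis less_le_trans zero_less_one)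
  have msk: "ms k = 1" using t0(2) gk unfolding ms_def is_leaf_def by simp
  have ms_sum: "m = (\<Sum>i=1..k. ms i)"
    using sum.reindex_bij_betw[OF g_bij, of "tdeg ET"] sum_TB unfolding ms_def by simp
  have ms_le: "ms i \<le> m" if "i \<in> {1..k}" for i
    unfolding ms_sum by (rule member_le_sum) (use that in auto)
  \<comment> \<open>transfer to a graph on natural numbers\<close>
  obtain hv where hv0: "bij_betw hv {0..<card V} V" using ex_bij_betw_nat_finite finV by blast
  obtain he where he0: "bij_betw he {0..<card E} E" using ex_bij_betw_nat_finite finE by blast
  define V' :: "nat set" where "V' = {0..<card V}"
  define E' :: "nat set" where "E' = {0..<card E}"
  have hv: "bij_betw hv V' V" and he: "bij_betw he E' E" using hv0 he0 unfolding V'_def E'_def by auto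
  have injv: "inj_on hv V'" and imV: "hv ` V' = V" and inje: "inj_on he E'" and imE: "he ` E' = E"
    using hv he by (auto simp: bij_betw_def)
  define hvi where "hvi = inv_into V' hv"
  define hei where "hei = inv_into E' he"
  have hvi1: "hvi (hv x) = x" if "x \<in> V'" for x using injv that unfolding hvi_def by simp
  have hvi2: "hv (hvi y) = y" "hvi y \<in> V'" if "y \<in> V" for y using imV that unfolding hvi_def
    by (auto simp: f_inv_into_f inv_into_into)
  have hei1: "hei (he x) = x" if "x \<in> E'" for x using inje that unfolding hei_def by simp
  have hei2: "he (hei y) = y" "hei y \<in> E'" if "y \<in> E" for y using imE that unfolding hei_def
    by (auto simp: f_inv_into_f inv_into_into)
  define ends' where "ends' e' = hvi ` ends (he e')" for e'
  define A' where "A' = {u\<in>V'. hv u \<in> A}"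
  define B' where "B' = {u\<in>V'. hv u \<in> B}"
  have heE: "he e' \<in> E" if "e' \<in> E'" for e' using imE that by blast
  have ends'P: "\<forall>e'\<in>E'. ends (he e') = hv ` ends' e' \<and> ends' e' \<subseteq> V'"
  proof
    fix e' assume e': "e' \<in> E'"
    have sub: "ends (he e') \<subseteq> V" using endsV heE[OF e'] by blast
    have "hv ` ends' e' = ends (he e')"
    proof -
      have "hv ` ends' e' = (\<lambda>y. hv (hvi y)) ` ends (he e')" unfolding ends'_def by (simp add: image_image)
      also have "\<dots> = (\<lambda>y. y) ` ends (he e')"
      proof (rule image_cong[OF refl])
        fix y assume "y \<in> ends (he e')"
        then show "hv (hvi y) = y" using sub hvi2(1) by blast
      qed
      finally show ?thesis by simp
    qed
    moreover have "ends' e' \<subseteq> V'" using sub hvi2(2) unfolding ends'_def by blast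
    ultimately show "ends (he e') = hv ` ends' e' \<and> ends' e' \<subseteq> V'" by simp
  qed
  have deg': "deg E' ends' u = deg E ends (hv u)" if "u \<in> V'" for u
    using transfer_card[OF hv he ends'P that, of "\<lambda>_. True"] unfolding deg_def by simp
  have bip': "bipartite_on V' E' ends' A' B'"
    unfolding bipartite_on_def multigraph_def
  proof (intro conjI ballI)
    show "finite V'" "finite E'" unfolding V'_def E'_def by simp_all
    show "A' \<union> B' = V'" using ABV(1) imV unfolding A'_def B'_def by blast
    show "A' \<inter> B' = {}" using ABV(2) unfolding A'_def B'_def by blast
  next
    fix e' assume e': "e' \<in> E'"
    show "ends' e' \<subseteq> V'" using ends'P e' by blast
    have "card (ends' e') = card (hv ` ends' e')"
      using inj_on_subset[OF injv] ends'P e' by (metis card_image)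
    also have "\<dots> = card (ends (he e'))" using ends'P e' by simp
    also have "\<dots> = 2" using mgG heE[OF e'] unfolding multigraph_def by blast
    finally show "card (ends' e') = 2" .
  next
    fix e' assume e': "e' \<in> E'"
    obtain a b where ab: "ends (he e') = {a, b}" "a \<in> A" "b \<in> B"
      using pE heE[OF e'] by blast
    have aV: "a \<in> V" and bV: "b \<in> V" using ab ABV(1) by auto
    have "ends' e' = {hvi a, hvi b}" unfolding ends'_def ab(1) by simp
    moreover have "hvi a \<in> A'" using hvi2[OF aV] ab(2) unfolding A'_def by simp
    moreover have "hvi b \<in> B'" using hvi2[OF bV] ab(3) unfolding B'_def by simp
    ultimately show "\<exists>a\<in>A'. \<exists>b\<in>B'. ends' e' = {a, b}" by blast
  qed
  have divA': "\<forall>v\<in>A'. m dvd deg E' ends' v" using divA deg' unfolding A'_def by auto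
  have conn': "edge_connected (f m (m * d)) V' E' ends'"
    by (rule transfer_ec[OF hv he ends'P endsV conn])
  have pre: "1 \<le> k \<and> (\<forall>i\<in>{1..k}. 0 < ms i) \<and> m = (\<Sum>i=1..k. ms i) \<and>
       bipartite_on V' E' ends' A' B' \<and> (\<forall>v\<in>A'. m dvd deg E' ends' v) \<and>
       edge_connected (f m (m * d)) V' E' ends'"
    using k1 ms_pos ms_sum bip' divA' conn' by blast
  from f[unfolded decomp_property_def, THEN spec[of _ m], THEN spec[of _ "m * d"], THEN spec[of _ k],
      THEN spec[of _ ms], THEN spec[of _ V'], THEN spec[of _ E'], THEN spec[of _ ends'], THEN spec[of _ A'],
      THEN spec[of _ B'], THEN mp, OF pre]
  obtain \<psi> :: "nat \<Rightarrow> nat" where \<psi>1: "\<forall>e\<in>E'. \<psi> e \<in> {1..k}"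
    and \<psi>2: "\<forall>i\<in>{1..k}. edge_connected (m * d) V' {e\<in>E'. \<psi> e = i} ends' \<and>
               (\<forall>v\<in>A'. m * deg {e\<in>E'. \<psi> e = i} ends' v = ms i * deg E' ends' v) \<and>
               (i < k \<longrightarrow> (\<forall>v\<in>B'. ms i dvd deg {e\<in>E'. \<psi> e = i} ends' v))"
    by blast
  define \<psi>0 where "\<psi>0 e = \<psi> (hei e)" for e
  define P where "P i = {e\<in>E. \<psi>0 e = i}" for i
  have \<psi>0rng: "\<psi>0 e \<in> {1..k}" if "e \<in> E" for e using \<psi>1 hei2(2)[OF that] unfolding \<psi>0_def by blast
  have degP: "deg (P i) ends v = deg {e'\<in>E'. \<psi> e' = i} ends' (hvi v)" if vV: "v \<in> V" for i v
  proof -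
    have "deg {e'\<in>E'. \<psi> e' = i} ends' (hvi v) = card {e'\<in>E'. hvi v \<in> ends' e' \<and> \<psi>0 (he e') = i}"
      unfolding deg_def \<psi>0_def by (rule arg_cong[where f=card]) (auto simp: hei1)
    also have "\<dots> = card {e\<in>E. hv (hvi v) \<in> ends e \<and> \<psi>0 e = i}"
      by (rule transfer_card[OF hv he ends'P hvi2(2)[OF vV]])
    also have "\<dots> = deg (P i) ends v" unfolding deg_def P_def hvi2(1)[OF vV]
      by (rule arg_cong[where f=card]) auto
    finally show ?thesis by simp
  qed
  have Pmd: "m * d \<le> deg (P i) ends v" if "i \<in> {1..k}" "v \<in> V" for i v
    using mindeg[of "m * d" V' "{e'\<in>E'. \<psi> e' = i}" ends' "hvi v"] \<psi>2 that hvi2(2) degP by auto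
  have PA: "m * deg (P i) ends v = ms i * deg E ends v" if "i \<in> {1..k}" "v \<in> A" for i v
  proof -
    have vV: "v \<in> V" using that ABV(1) by blast
    have "hvi v \<in> A'" using hvi2[OF vV] that(2) unfolding A'_def by simp
    then show ?thesis using \<psi>2 that(1) degP[OF vV] deg'[OF hvi2(2)[OF vV]] hvi2(1)[OF vV] by auto
  qed
  have PB: "ms i dvd deg (P i) ends v" if "i \<in> {1..k}" "i < k" "v \<in> B" for i v
  proof -
    have vV: "v \<in> V" using that ABV(1) by blast
    have "hvi v \<in> B'" using hvi2[OF vV] that(3) unfolding B'_def by simp
    then show ?thesis using \<psi>2 that(1,2) degP[OF vV] by auto
  qed
  have Pout: "deg (P i) ends v = 0" if "v \<notin> V" for i v
  proof -
    have em: "{e\<in>P i. v \<in> ends e} = {}" using endsV that unfolding P_def by blast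
    show ?thesis unfolding deg_def em by simp
  qed
  have Pdvd: "\<forall>v. ms i dvd deg (P i) ends v" if ik: "i \<in> {1..k}" for i
  proof
    fix v
    show "ms i dvd deg (P i) ends v"
    proof (cases "v \<in> A")
      case True
      obtain q where q: "deg E ends v = m * q" using divA True by blast
      have "m * deg (P i) ends v = m * (ms i * q)" using PA[OF ik True] q by (metis mult.left_commute)
      then have "deg (P i) ends v = ms i * q" using m1 by auto
      then show ?thesis by simp
    next
      case nA: False
      show ?thesis
      proof (cases "v \<in> B")
        case True
        show ?thesis
        proof (cases "i < k")
          case True then show ?thesis using PB ik \<open>v \<in> B\<close> by blast
        next
          case False then have "i = k" using ik by auto
          then show ?thesis using msk by simp
        qed
      next
        case False
        then have "v \<notin> V" using nA ABV(1) by blast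
        then show ?thesis using Pout by simp
      qed
    qed
  qed
  have "\<forall>i\<in>{1..k}. \<exists>\<phi>. (\<forall>e\<in>P i. \<phi> e < ms i) \<and> (\<forall>v j. j < ms i \<longrightarrow> ms i * dcol (P i) ends \<phi> j v = deg (P i) ends v)"
  proof
    fix i assume ik: "i \<in> {1..k}"
    show "\<exists>\<phi>. (\<forall>e\<in>P i. \<phi> e < ms i) \<and> (\<forall>v j. j < ms i \<longrightarrow> ms i * dcol (P i) ends \<phi> j v = deg (P i) ends v)"
      by (rule exact_split[of "P i" ends p A B "ms i"]) (use finE pE ABV(2) ms_pos ik Pdvd[OF ik] in \<open>auto simp: P_def\<close>)
  qed
  from bchoice[OF this] obtain \<Phi> where \<Phi>: "\<forall>i\<in>{1..k}. (\<forall>e\<in>P i. \<Phi> i e < ms i) \<and> (\<forall>v j. j < ms i \<longrightarrow> ms i * dcol (P i) ends (\<Phi> i) j v = deg (P i) ends v)"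
    by blast
  define col where "col t = (SOME h. bij_betw h {0..<tdeg ET t} (tcols ET c t))" for t
  have col: "bij_betw (col t) {0..<tdeg ET t} (tcols ET c t)" for t
  proof -
    have "finite (tcols ET c t)" using finET unfolding tcols_def by simp
    then have "\<exists>h. bij_betw h {0..<tdeg ET t} (tcols ET c t)"
      using ex_bij_betw_nat_finite tcols_card by metis
    then show ?thesis unfolding col_def by (rule someI_ex)
  qed
  define \<phi> where "\<phi> e = col (g (\<psi>0 e)) (\<Phi> (\<psi>0 e) e)" for e
  have \<phi>_in: "\<phi> e \<in> tcols ET c (g (\<psi>0 e))" if eE: "e \<in> E" for e
  proof -
    have i: "\<psi>0 e \<in> {1..k}" using \<psi>0rng[OF eE] .
    have "e \<in> P (\<psi>0 e)" using eE unfolding P_def by simp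
    then have "\<Phi> (\<psi>0 e) e < tdeg ET (g (\<psi>0 e))" using \<Phi> i unfolding ms_def by blast
    then show ?thesis using col[of "g (\<psi>0 e)"] unfolding \<phi>_def bij_betw_def by auto
  qed
  have key: "ms i * dcol E ends \<phi> j v = deg (P i) ends v" if ik: "i \<in> {1..k}" and jt: "j \<in> tcols ET c (g i)" for i j v
  proof -
    obtain x where x: "x < tdeg ET (g i)" "col (g i) x = j"
      using jt col[of "g i"] unfolding bij_betw_def by (metis atLeastLessThan_iff imageE)
    have injc: "inj_on (col (g i)) {0..<tdeg ET (g i)}" using col[of "g i"] unfolding bij_betw_def by blast
    have "{e\<in>E. v \<in> ends e \<and> \<phi> e = j} = {e\<in>P i. v \<in> ends e \<and> \<Phi> i e = x}"
    proof (intro equalityI subsetI)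
      fix e assume "e \<in> {e\<in>E. v \<in> ends e \<and> \<phi> e = j}"
      then have e: "e \<in> E" "v \<in> ends e" "\<phi> e = j" by auto
      have i': "\<psi>0 e \<in> {1..k}" using \<psi>0rng[OF e(1)] .
      have "j \<in> tcols ET c (g (\<psi>0 e))" using \<phi>_in[OF e(1)] e(3) by simp
      then have "g (\<psi>0 e) = g i" using tcols_uniq g_in i' ik jt by blast
      then have ei: "\<psi>0 e = i" using g_inj i' ik by (metis inj_onD)
      then have eP: "e \<in> P i" using e(1) unfolding P_def by simp
      then have "\<Phi> i e < tdeg ET (g i)" using \<Phi> ik unfolding ms_def by blast
      moreover have "col (g i) (\<Phi> i e) = col (g i) x" using e(3) ei x(2) unfolding \<phi>_def by simp
      ultimately have "\<Phi> i e = x" using injc x(1) by (metis atLeastLessThan_iff inj_onD zero_le)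
      then show "e \<in> {e\<in>P i. v \<in> ends e \<and> \<Phi> i e = x}" using eP e(2) by simp
    next
      fix e assume "e \<in> {e\<in>P i. v \<in> ends e \<and> \<Phi> i e = x}"
      then have e: "e \<in> E" "\<psi>0 e = i" "v \<in> ends e" "\<Phi> i e = x" unfolding P_def by auto
      then show "e \<in> {e\<in>E. v \<in> ends e \<and> \<phi> e = j}" unfolding \<phi>_def using x(2) by simp
    qed
    then have "dcol E ends \<phi> j v = dcol (P i) ends (\<Phi> i) x v" unfolding dcol_def by simp
    moreover have "x < ms i" using x(1) unfolding ms_def .
    ultimately show ?thesis using \<Phi> ik by auto
  qed
  have gsurj: "\<exists>i\<in>{1..k}. g i = t" if "t \<in> TB" for t
    using g_bij that unfolding bij_betw_def by blast
  have jpart: "\<exists>i\<in>{1..k}. j \<in> tcols ET c (g i)" if "j \<in> {1..m}" for j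
    using tcols_cover[OF that] gsurj by blast
  have aval: "m * dcol E ends \<phi> j v = deg E ends v" if vA: "v \<in> A" and j: "j \<in> {1..m}" for v j
  proof -
    obtain i where i: "i \<in> {1..k}" "j \<in> tcols ET c (g i)" using jpart[OF j] by blast
    have "ms i * (m * dcol E ends \<phi> j v) = m * (ms i * dcol E ends \<phi> j v)" by simp
    also have "\<dots> = m * deg (P i) ends v" using key[OF i] by simp
    also have "\<dots> = ms i * deg E ends v" using PA[OF i(1) vA] .
    moreover have "0 < ms i" using ms_pos i(1) by blast
    ultimately show ?thesis by simp
  qed
  show ?thesis
  proof (intro exI[of _ \<phi>] conjI)
    show "T_equitable ET TA TB c E ends A B \<phi>" unfolding T_equitable_def
    proof (intro conjI ballI impI)
      fix e assume "e \<in> E"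
      then show "\<phi> e \<in> {1..card ET}" using \<phi>_in tcols_sub m_def by blast
    next
      fix v t j j' assume v: "v \<in> A" and t: "t \<in> TA" and j: "j \<in> tcols ET c t" and j': "j' \<in> tcols ET c t"
      have "m * dcol E ends \<phi> j v = m * dcol E ends \<phi> j' v"
        using aval[OF v] j j' tcols_sub by (metis subsetD)
      then show "dcol E ends \<phi> j v = dcol E ends \<phi> j' v" using m1 by simp
    next
      fix v t j j' assume v: "v \<in> B" and t: "t \<in> TB" and j: "j \<in> tcols ET c t" and j': "j' \<in> tcols ET c t"
      obtain i where i: "i \<in> {1..k}" "g i = t" using gsurj[OF t] by blast
      have "ms i * dcol E ends \<phi> j v = ms i * dcol E ends \<phi> j' v"
        using key[OF i(1)] j j' i(2) by simp
      moreover have "0 < ms i" using ms_pos i(1) by blast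
      ultimately show "dcol E ends \<phi> j v = dcol E ends \<phi> j' v" by simp
    qed
    show "\<forall>v\<in>V. \<forall>j\<in>{1..m}. d \<le> dcol E ends \<phi> j v"
    proof (intro ballI)
      fix v j assume v: "v \<in> V" and j: "j \<in> {1..m}"
      obtain i where i: "i \<in> {1..k}" "j \<in> tcols ET c (g i)" using jpart[OF j] by blast
      have "ms i * d \<le> m * d" using ms_le[OF i(1)] by simp
      also have "\<dots> \<le> deg (P i) ends v" using Pmd[OF i(1) v] .
      also have "\<dots> = ms i * dcol E ends \<phi> j v" using key[OF i] by simp
      finally have "ms i * d \<le> ms i * dcol E ends \<phi> j v" .
      moreover have "0 < ms i" using ms_pos i(1) by blast
      ultimately show "d \<le> dcol E ends \<phi> j v" by simp
    qed
  qed
qed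

end
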